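(* For every directed graph $G=(V,E)$ and every state $\mathcal{S}$ with no red nodes, the set function $A\mapsto\mathcal{F}_{\mathcal{S}}(A)$ on subsets $A\subseteq V\setminus\mathcal{S}^b$ is monotonically increasing (i.e. $\mathcal{F}_{\mathcal{S}}(A)\le\mathcal{F}_{\mathcal{S}}(A\cup\{v\})$) and submodular (i.e. for all $A\subseteq A'\subseteq V\setminus\mathcal{S}^b$ and $v\in V\setminus\mathcal{S}^b$, $\mathcal{F}_{\mathcal{S}}(A'\cup\{v\})-\mathcal{F}_{\mathcal{S}}(A')\le\mathcal{F}_{\mathcal{S}}(A\cup\{v\})-\mathcal{F}_{\mathcal{S}}(A)$).
   Context: A state is a map $\mathcal{S}:V\to\{b,r,u\}$ (blue, red, uncolored); colored means blue or red; $\mathcal{S}^b$ is the set of blue nodes. The \textsc{Random Pick} process from an initial state $\mathcal{S}_0$: in each round $t=1,2,\dots$, every node $v$ with at least one out-neighbor picks an out-neighbor $ps_t(v)$ uniformly at random, independently of all other picks; $\mathcal{S}_t(v)=\mathcal{S}_{t-1}(ps_t(v))$ if $\mathcal{S}_{t-1}(v)=u$ and $\mathcal{S}_{t-1}(ps_t(v))\ne u$, else $\mathcal{S}_t(v)=\mathcal{S}_{t-1}(v)$. It almost surely reaches a stable state (no uncolored node has a colored out-neighbor). For a state $\mathcal{S}$ with no red nodes and $A\subseteq V\setminus\mathcal{S}^b$, $\mathcal{F}_{\mathcal{S}}(A)$ is the expected number of red nodes in the final stable state of the process started from $\mathcal{S}$ with all nodes of $A$ recolored red. *)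

theory Defs
  imports "HOL-Probability.Probability"
begin

datatype color = Blue | Red | Uncolored

type_synonym 'a state = "'a \<Rightarrow> color"

definition out_nbrs :: "('a \<times> 'a) set \<Rightarrow> 'a \<Rightarrow> 'a set" where
  "out_nbrs E v = {w. (v, w) \<in> E}"

definition blue_nodes :: "'a set \<Rightarrow> 'a state \<Rightarrow> 'a set" where
  "blue_nodes V S = {v \<in> V. S v = Blue}"

definition rp_update :: "('a \<times> 'a) set \<Rightarrow> 'a state \<Rightarrow> ('a \<Rightarrow> 'a) \<Rightarrow> 'a state" where
  "rp_update E S p = (\<lambda>v. if S v = Uncolored \<and> out_nbrs E v \<noteq> {} \<and> S (p v) \<noteq> Uncolored
                           then S (p v) else S v)"

definition rp_round :: "'a set \<Rightarrow> ('a \<times> 'a) set \<Rightarrow> 'a state \<Rightarrow> 'a state pmf" where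
  "rp_round V E S = map_pmf (rp_update E S)
     (Pi_pmf {v \<in> V. out_nbrs E v \<noteq> {}} undefined (\<lambda>v. pmf_of_set (out_nbrs E v)))"

primrec rp_states :: "'a set \<Rightarrow> ('a \<times> 'a) set \<Rightarrow> 'a state \<Rightarrow> nat \<Rightarrow> 'a state pmf" where
  "rp_states V E S 0 = return_pmf S"
| "rp_states V E S (Suc t) = bind_pmf (rp_states V E S t) (rp_round V E)"

definition num_red :: "'a set \<Rightarrow> 'a state \<Rightarrow> real" where
  "num_red V S = real (card {v \<in> V. S v = Red})"

definition recolor_red :: "'a state \<Rightarrow> 'a set \<Rightarrow> 'a state" where
  "recolor_red S A = (\<lambda>v. if v \<in> A then Red else S v)"

text \<open>Expected number of red nodes in the final stable state: the limit, as the number of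
  rounds tends to infinity, of the expected number of red nodes after t rounds (the process
  is absorbed in a stable state almost surely and colours never change once assigned).\<close>
definition F_rp :: "'a set \<Rightarrow> ('a \<times> 'a) set \<Rightarrow> 'a state \<Rightarrow> 'a set \<Rightarrow> real" where
  "F_rp V E S A = lim (\<lambda>t. measure_pmf.expectation (rp_states V E (recolor_red S A) t) (num_red V))"

end

theory Submission
  imports Defs
begin

definition picks_pmf :: "'a set \<Rightarrow> ('a \<times> 'a) set \<Rightarrow> ('a \<Rightarrow> 'a) pmf" where
  "picks_pmf V E = Pi_pmf {v \<in> V. out_nbrs E v \<noteq> {}} undefined (\<lambda>v. pmf_of_set (out_nbrs E v))"

primrec jstates :: "'a set \<Rightarrow> ('a \<times> 'a) set \<Rightarrow> (nat \<Rightarrow> 'a state) \<Rightarrow> nat \<Rightarrow> (nat \<Rightarrow> 'a state) pmf" where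
  "jstates V E ss 0 = return_pmf ss"
| "jstates V E ss (Suc t) = bind_pmf (jstates V E ss t)
     (\<lambda>s. map_pmf (\<lambda>p i. rp_update E (s i) p) (picks_pmf V E))"

lemma jmarg: "map_pmf (\<lambda>s. s i) (jstates V E ss t) = rp_states V E (ss i) t"
proof (induction t)
  case 0
  then show ?case by simp
next
  case (Suc t)
  have "rp_states V E (ss i) (Suc t) = bind_pmf (map_pmf (\<lambda>s. s i) (jstates V E ss t)) (rp_round V E)"
    using Suc by simp
  also have "\<dots> = bind_pmf (jstates V E ss t) (\<lambda>s. rp_round V E (s i))"
    by (simp add: bind_map_pmf)
  finally show ?case
    by (simp add: map_bind_pmf map_pmf_comp rp_round_def picks_pmf_def)
qed

definition Q4 :: "color \<Rightarrow> color \<Rightarrow> color \<Rightarrow> color \<Rightarrow> bool" where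
  "Q4 a b c d \<longleftrightarrow> (a, b, c, d) \<in> {(Blue,Blue,Blue,Blue), (Blue,Blue,Red,Red), (Blue,Red,Blue,Red),
     (Blue,Red,Red,Red), (Red,Red,Red,Red), (Uncolored,Red,Red,Red), (Uncolored,Red,Uncolored,Red),
     (Uncolored,Uncolored,Red,Red), (Uncolored,Uncolored,Uncolored,Uncolored)}"

lemma Q4_diag: "Q4 c c c c"
  by (cases c) (auto simp: Q4_def)

lemma Q4_step:
  assumes "Q4 a b c d" "Q4 a' b' c' d'"
  shows "Q4 (if a = Uncolored \<and> P \<and> a' \<noteq> Uncolored then a' else a)
            (if b = Uncolored \<and> P \<and> b' \<noteq> Uncolored then b' else b)
            (if c = Uncolored \<and> P \<and> c' \<noteq> Uncolored then c' else c)
            (if d = Uncolored \<and> P \<and> d' \<noteq> Uncolored then d' else d)"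
  using assms unfolding Q4_def by auto

lemma Q4_count:
  assumes "Q4 a b c d"
  shows "(if d = Red then 1 else 0) + (if a = Red then 1 else 0)
     \<le> (if b = Red then 1 else 0) + (if c = Red then (1::real) else 0)"
    and "(if a = Red then 1 else (0::real)) \<le> (if b = Red then 1 else 0)"
  using assms unfolding Q4_def by auto

lemma jinv:
  assumes "\<forall>x. Q4 (ss 0 x) (ss 1 x) (ss 2 x) (ss 3 x)"
  shows "s \<in> set_pmf (jstates V E ss t) \<Longrightarrow> \<forall>x. Q4 (s 0 x) (s 1 x) (s 2 x) (s 3 x)"
proof (induction t arbitrary: s)
  case 0
  then show ?case using assms by simp
next
  case (Suc t)
  then obtain s0 p where s0: "s0 \<in> set_pmf (jstates V E ss t)" and s: "s = (\<lambda>i. rp_update E (s0 i) p)"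
    by auto
  have IH: "\<forall>x. Q4 (s0 0 x) (s0 1 x) (s0 2 x) (s0 3 x)" using Suc.IH s0 by blast
  show ?case
  proof
    fix x
    show "Q4 (s 0 x) (s 1 x) (s 2 x) (s 3 x)"
      unfolding s rp_update_def using Q4_step[OF IH[rule_format, of x] IH[rule_format, of "p x"]]
      by simp
  qed
qed

lemma num_red_sum:
  assumes "finite V"
  shows "num_red V s = (\<Sum>v\<in>V. if s v = Red then 1 else 0)"
  unfolding num_red_def using assms
  by (simp add: sum.inter_filter[symmetric])

lemma num_red_bound:
  assumes "finite V"
  shows "0 \<le> num_red V s" "num_red V s \<le> real (card V)"
  unfolding num_red_def using assms by (auto intro: card_mono)

lemma integrable_num_red:
  assumes "finite V"
  shows "integrable (measure_pmf M) (\<lambda>x. num_red V (f x))"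
  by (rule measure_pmf.integrable_const_bound[where B = "real (card V)"])
     (use num_red_bound[OF assms] in auto)

lemma exp_j:
  "measure_pmf.expectation (rp_states V E (ss i) t) (num_red V)
   = measure_pmf.expectation (jstates V E ss t) (\<lambda>s. num_red V (s i))"
  by (simp add: jmarg[symmetric])

lemma coupling_ineq:
  fixes V :: "'a set" and E :: "('a \<times> 'a) set" and ss :: "nat \<Rightarrow> 'a state"
  assumes "finite V" "\<forall>x. Q4 (ss 0 x) (ss 1 x) (ss 2 x) (ss 3 x)"
  defines "e \<equiv> \<lambda>i t. measure_pmf.expectation (rp_states V E (ss i) t) (num_red V)"
  shows "e 3 t + e 0 t \<le> e 1 t + e 2 t" and "e 0 t \<le> e 1 t"
proof -
  let ?J = "jstates V E ss t"
  have I: "\<And>i. integrable (measure_pmf ?J) (\<lambda>s. num_red V (s i))"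
    by (rule integrable_num_red[OF assms(1)])
  have "e 3 t + e 0 t = measure_pmf.expectation ?J (\<lambda>s. num_red V (s 3) + num_red V (s 0))"
    unfolding e_def exp_j by (simp add: I)
  also have "\<dots> \<le> measure_pmf.expectation ?J (\<lambda>s. num_red V (s 1) + num_red V (s 2))"
  proof (rule integral_mono_AE)
    show "integrable (measure_pmf ?J) (\<lambda>s. num_red V (s 3) + num_red V (s 0))" by (simp add: I)
    show "integrable (measure_pmf ?J) (\<lambda>s. num_red V (s 1) + num_red V (s 2))" by (simp add: I)
    show "AE s in measure_pmf ?J. num_red V (s 3) + num_red V (s 0) \<le> num_red V (s 1) + num_red V (s 2)"
    proof (rule AE_pmfI)
      fix s assume "s \<in> set_pmf ?J"
      then have q: "\<forall>x. Q4 (s 0 x) (s 1 x) (s 2 x) (s 3 x)" using jinv[OF assms(2)] by blast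
      show "num_red V (s 3) + num_red V (s 0) \<le> num_red V (s 1) + num_red V (s 2)"
        unfolding num_red_sum[OF assms(1)] sum.distrib[symmetric]
        by (rule sum_mono) (use Q4_count(1) q in blast)
    qed
  qed
  also have "\<dots> = e 1 t + e 2 t"
    unfolding e_def exp_j by (simp add: I)
  finally show "e 3 t + e 0 t \<le> e 1 t + e 2 t" .
  have "e 0 t = measure_pmf.expectation ?J (\<lambda>s. num_red V (s 0))"
    unfolding e_def exp_j by simp
  also have "\<dots> \<le> measure_pmf.expectation ?J (\<lambda>s. num_red V (s 1))"
  proof (rule integral_mono_AE)
    show "AE s in measure_pmf ?J. num_red V (s 0) \<le> num_red V (s 1)"
    proof (rule AE_pmfI)
      fix s assume "s \<in> set_pmf ?J"
      then have q: "\<forall>x. Q4 (s 0 x) (s 1 x) (s 2 x) (s 3 x)" using jinv[OF assms(2)] by blast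
      show "num_red V (s 0) \<le> num_red V (s 1)"
        unfolding num_red_sum[OF assms(1)]
        by (rule sum_mono) (use Q4_count(2) q in blast)
    qed
  qed (simp_all add: I)
  also have "\<dots> = e 1 t"
    unfolding e_def exp_j by simp
  finally show "e 0 t \<le> e 1 t" .
qed


lemma round_keeps_red:
  assumes "s' \<in> set_pmf (rp_round V E s)" "s v = Red"
  shows "s' v = Red"
  using assms unfolding rp_round_def rp_update_def by auto

lemma time_mono:
  fixes V :: "'a set" and E :: "('a \<times> 'a) set"
  assumes "finite V"
  shows "measure_pmf.expectation (rp_states V E S0 t) (num_red V)
       \<le> measure_pmf.expectation (rp_states V E S0 (Suc t)) (num_red V)"
proof -
  define P where "P = bind_pmf (rp_states V E S0 t) (\<lambda>s. map_pmf (\<lambda>s'. (s, s')) (rp_round V E s))"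
  have f: "map_pmf fst P = rp_states V E S0 t"
    unfolding P_def by (simp add: map_bind_pmf map_pmf_comp bind_return_pmf')
  have g: "map_pmf snd P = rp_states V E S0 (Suc t)"
    unfolding P_def by (simp add: map_bind_pmf map_pmf_comp)
  have "measure_pmf.expectation (rp_states V E S0 t) (num_red V)
      = measure_pmf.expectation P (\<lambda>x. num_red V (fst x))"
    by (simp add: f[symmetric])
  also have "\<dots> \<le> measure_pmf.expectation P (\<lambda>x. num_red V (snd x))"
  proof (rule integral_mono_AE)
    show "AE x in measure_pmf P. num_red V (fst x) \<le> num_red V (snd x)"
    proof (rule AE_pmfI)
      fix x assume "x \<in> set_pmf P"
      then obtain s s' where x: "x = (s, s')" and s': "s' \<in> set_pmf (rp_round V E s)"
        unfolding P_def by auto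
      have "{v \<in> V. s v = Red} \<subseteq> {v \<in> V. s' v = Red}"
        using round_keeps_red[OF s'] by auto
      then show "num_red V (fst x) \<le> num_red V (snd x)"
        unfolding x num_red_def using assms by (simp add: card_mono)
    qed
  qed (rule integrable_num_red[OF assms])+
  also have "\<dots> = measure_pmf.expectation (rp_states V E S0 (Suc t)) (num_red V)"
    unfolding g[symmetric] by simp
  finally show ?thesis .
qed

lemma conv:
  fixes V :: "'a set" and E :: "('a \<times> 'a) set"
  assumes "finite V"
  shows "(\<lambda>t. measure_pmf.expectation (rp_states V E S0 t) (num_red V))
           \<longlonglongrightarrow> lim (\<lambda>t. measure_pmf.expectation (rp_states V E S0 t) (num_red V))"
proof -
  let ?X = "\<lambda>t. measure_pmf.expectation (rp_states V E S0 t) (num_red V)"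
  have inc: "incseq ?X"
    by (rule incseq_SucI) (rule time_mono[OF assms])
  have bnd: "\<forall>i. ?X i \<le> real (card V)"
  proof
    fix i
    show "?X i \<le> real (card V)"
      by (rule measure_pmf.integral_le_const)
         (use integrable_num_red[OF assms, of _ "\<lambda>x. x"] num_red_bound[OF assms] in auto)
  qed
  obtain L where "?X \<longlonglongrightarrow> L" using incseq_convergent[OF inc bnd] by blast
  then show ?thesis by (simp add: limI)
qed

lemma main:
  fixes V :: "'a set" and E :: "('a \<times> 'a) set" and S :: "'a state"
  assumes "finite V" and "\<forall>v \<in> V. S v \<noteq> Red"
    and "A \<subseteq> A'" "A' \<subseteq> V - blue_nodes V S" "v \<in> V - blue_nodes V S"
  shows "F_rp V E S (A' \<union> {v}) - F_rp V E S A' \<le> F_rp V E S (A \<union> {v}) - F_rp V E S A"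
    and "F_rp V E S A \<le> F_rp V E S (A \<union> {v})"
proof -
  define ss :: "nat \<Rightarrow> 'a state" where "ss = (\<lambda>i. recolor_red S
     (if i = 0 then A else if i = 1 then A \<union> {v} else if i = 2 then A' else A' \<union> {v}))"
  have unc: "S x = Uncolored" if "x \<in> V - blue_nodes V S" for x
    using that assms(2) by (cases "S x") (auto simp: blue_nodes_def)
  have Q: "\<forall>x. Q4 (ss 0 x) (ss 1 x) (ss 2 x) (ss 3 x)"
  proof
    fix x
    show "Q4 (ss 0 x) (ss 1 x) (ss 2 x) (ss 3 x)"
    proof (cases "x \<in> A' \<union> {v}")
      case True
      then have "S x = Uncolored" using unc assms(3-5) by blast
      then show ?thesis using True assms(3) unfolding ss_def recolor_red_def Q4_def by auto
    next
      case False
      then show ?thesis using assms(3) unfolding ss_def recolor_red_def by (auto simp: Q4_diag)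
    qed
  qed
  define e where "e = (\<lambda>i t. measure_pmf.expectation (rp_states V E (ss i) t) (num_red V))"
  have F: "F_rp V E S A = lim (e 0)" "F_rp V E S (A \<union> {v}) = lim (e 1)"
          "F_rp V E S A' = lim (e 2)" "F_rp V E S (A' \<union> {v}) = lim (e 3)"
    unfolding F_rp_def e_def ss_def by simp_all
  have L: "e i \<longlonglongrightarrow> lim (e i)" for i
    unfolding e_def by (rule conv[OF assms(1)])
  have "(\<lambda>t. e 3 t + e 0 t) \<longlonglongrightarrow> lim (e 3) + lim (e 0)" by (intro tendsto_add L)
  moreover have "(\<lambda>t. e 1 t + e 2 t) \<longlonglongrightarrow> lim (e 1) + lim (e 2)" by (intro tendsto_add L)
  ultimately have "lim (e 3) + lim (e 0) \<le> lim (e 1) + lim (e 2)"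
    by (rule LIMSEQ_le) (use coupling_ineq(1)[OF assms(1) Q] in \<open>auto simp: e_def\<close>)
  then show "F_rp V E S (A' \<union> {v}) - F_rp V E S A' \<le> F_rp V E S (A \<union> {v}) - F_rp V E S A"
    unfolding F by simp
  have "lim (e 0) \<le> lim (e 1)"
    by (rule LIMSEQ_le[OF L L]) (use coupling_ineq(2)[OF assms(1) Q] in \<open>auto simp: e_def\<close>)
  then show "F_rp V E S A \<le> F_rp V E S (A \<union> {v})"
    unfolding F by simp
qed

theorem theorem2p2:
  fixes V :: "'a set" and E :: "('a \<times> 'a) set" and S :: "'a state"
  assumes "finite V" and "E \<subseteq> V \<times> V"
    and "\<forall>v \<in> V. S v \<noteq> Red"
  shows "(\<forall>A v. A \<subseteq> V - blue_nodes V S \<and> v \<in> V - blue_nodes V S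
            \<longrightarrow> F_rp V E S A \<le> F_rp V E S (A \<union> {v}))
       \<and> (\<forall>A A' v. A \<subseteq> A' \<and> A' \<subseteq> V - blue_nodes V S \<and> v \<in> V - blue_nodes V S
            \<longrightarrow> F_rp V E S (A' \<union> {v}) - F_rp V E S A'
                \<le> F_rp V E S (A \<union> {v}) - F_rp V E S A)"
  using main[OF assms(1) assms(3)] by blast

end
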